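(* Let $\mathcal{D}=(\mathcal{P},\mathcal{L})$ be a $(G,2)$-point-transitive linear space, and let $\overline{\mathcal{D}}$ be its complement. Let $(\sigma,L)$ be an antiflag of $\mathcal{D}$ (so $\sigma\in\mathcal{P}\setminus L$, $L\in\mathcal{L}$) such that $\Omega=(\sigma,\mathcal{P}\setminus L)^G$ is a feasible $G$-orbit on the set of flags of $\overline{\mathcal{D}}$, and let $\Psi=((\sigma,\mathcal{P}\setminus L),(\tau,\mathcal{P}\setminus N))^G$ be a self-paired $G$-orbit on $\mathcal{C}(\overline{\mathcal{D}},\Omega)$. Then the $G$-flag graph $\Gamma=\Gamma(\overline{\mathcal{D}},\Omega,\Psi)$ has order $|\mathcal{P}|\cdot|L^{G_\sigma}|$ and valency $(|\mathcal{P}|-|L|-1)\cdot|N^{G_{\sigma,\tau,L}}|$. Moreover, there are exactly $|L^{G_{\sigma,\tau}}|$ vertices in $\Omega(\sigma)$ that have neighbours in $\Omega(\tau)$, and each of them has exactly $|N^{G_{\sigma,\tau,L}}|$ neighbours in $\Omega(\tau)$.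
   Context: All groups are finite. A linear space is an incidence structure of points and lines (lines identified with point sets) in which each line has at least two points and any two points lie on exactly one line; it is $(G,2)$-point-transitive if $G$ acts as automorphisms, 2-transitively on points. The complement $\overline{\mathcal{D}}$ has point set $\mathcal{P}$ and blocks $\mathcal{P}\setminus L$, $L\in\mathcal{L}$. A flag of a design is a pair (point, block containing it); an antiflag is a pair (point, block not containing it). For a $G$-orbit $\Omega$ on flags and a point $\sigma$, $\Omega(\sigma)$ is the set of flags in $\Omega$ with point-entry $\sigma$. $\Omega$ is feasible if $|\Omega(\sigma)|\ge2$ for some (hence all) point $\sigma$ and, for some (hence all) flag $(\sigma,M)\in\Omega$, $G_{\sigma,M}$ (setwise stabilizer of $M$ in $G_\sigma$) is transitive on $M\setminus\{\sigma\}$. $\mathcal{C}(\overline{\mathcal{D}},\Omega)=\{((\sigma,M),(\tau,M'))\in\Omega\times\Omega:\sigma\ne\tau,\ \sigma,\tau\in M\cap M'\}$. A $G$-orbit $\Psi$ on it is self-paired if $((\sigma,M),(\tau,M'))\in\Psi$ implies $((\tau,M'),(\sigma,M))\in\Psi$. The $G$-flag graph $\Gamma(\overline{\mathcal{D}},\Omega,\Psi)$ has vertex set $\Omega$, with two flags adjacent iff the ordered pair lies in $\Psi$. $G_{\sigma,\tau}=G_\sigma\cap G_\tau$, and $G_{\sigma,\tau,L}$ is the setwise stabilizer of $L$ in $G_{\sigma,\tau}$; $X^K$ denotes the orbit of $X$ under $K$. *)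

theory Defs
  imports "HOL-Algebra.Group_Action"
begin

definition linear_space :: "'a set \<Rightarrow> 'a set set \<Rightarrow> bool" where
  "linear_space P Ls \<longleftrightarrow>
     (\<forall>L\<in>Ls. L \<subseteq> P \<and> 2 \<le> card L) \<and>
     (\<forall>x\<in>P. \<forall>y\<in>P. x \<noteq> y \<longrightarrow> (\<exists>!L. L \<in> Ls \<and> x \<in> L \<and> y \<in> L))"

definition G2_point_transitive ::
  "('g, 'b) monoid_scheme \<Rightarrow> ('g \<Rightarrow> 'a \<Rightarrow> 'a) \<Rightarrow> 'a set \<Rightarrow> 'a set set \<Rightarrow> bool" where
  "G2_point_transitive G \<phi> P Ls \<longleftrightarrow>
     finite P \<and> finite (carrier G) \<and>
     linear_space P Ls \<and> group_action G P \<phi> \<and>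
     (\<forall>g\<in>carrier G. \<forall>L\<in>Ls. \<phi> g ` L \<in> Ls) \<and>
     (\<forall>x\<in>P. \<forall>y\<in>P. \<forall>x'\<in>P. \<forall>y'\<in>P. x \<noteq> y \<longrightarrow> x' \<noteq> y' \<longrightarrow>
        (\<exists>g\<in>carrier G. \<phi> g x = x' \<and> \<phi> g y = y'))"

definition compl_blocks :: "'a set \<Rightarrow> 'a set set \<Rightarrow> 'a set set" where
  "compl_blocks P Ls = (\<lambda>L. P - L) ` Ls"

definition compl_flags :: "'a set \<Rightarrow> 'a set set \<Rightarrow> ('a \<times> 'a set) set" where
  "compl_flags P Ls = {(x, M). M \<in> compl_blocks P Ls \<and> x \<in> M}"

definition flag_act :: "('g \<Rightarrow> 'a \<Rightarrow> 'a) \<Rightarrow> 'g \<Rightarrow> 'a \<times> 'a set \<Rightarrow> 'a \<times> 'a set" where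
  "flag_act \<phi> g f = (\<phi> g (fst f), \<phi> g ` snd f)"

definition flag_orbit :: "('g, 'b) monoid_scheme \<Rightarrow> ('g \<Rightarrow> 'a \<Rightarrow> 'a) \<Rightarrow> 'a \<times> 'a set
    \<Rightarrow> ('a \<times> 'a set) set" where
  "flag_orbit G \<phi> f = (\<lambda>g. flag_act \<phi> g f) ` carrier G"

definition flagpair_orbit :: "('g, 'b) monoid_scheme \<Rightarrow> ('g \<Rightarrow> 'a \<Rightarrow> 'a)
    \<Rightarrow> ('a \<times> 'a set) \<times> ('a \<times> 'a set) \<Rightarrow> (('a \<times> 'a set) \<times> ('a \<times> 'a set)) set" where
  "flagpair_orbit G \<phi> p = (\<lambda>g. (flag_act \<phi> g (fst p), flag_act \<phi> g (snd p))) ` carrier G"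

definition set_orbit :: "('g \<Rightarrow> 'a \<Rightarrow> 'a) \<Rightarrow> 'g set \<Rightarrow> 'a set \<Rightarrow> 'a set set" where
  "set_orbit \<phi> H X = (\<lambda>g. \<phi> g ` X) ` H"

definition setwise_stab :: "('g \<Rightarrow> 'a \<Rightarrow> 'a) \<Rightarrow> 'g set \<Rightarrow> 'a set \<Rightarrow> 'g set" where
  "setwise_stab \<phi> H X = {g \<in> H. \<phi> g ` X = X}"

definition flags_at :: "('a \<times> 'a set) set \<Rightarrow> 'a \<Rightarrow> ('a \<times> 'a set) set" where
  "flags_at \<Omega> x = {f \<in> \<Omega>. fst f = x}"

definition feasible :: "('g, 'b) monoid_scheme \<Rightarrow> ('g \<Rightarrow> 'a \<Rightarrow> 'a) \<Rightarrow> 'a set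
    \<Rightarrow> ('a \<times> 'a set) set \<Rightarrow> bool" where
  "feasible G \<phi> P \<Omega> \<longleftrightarrow>
     (\<exists>x\<in>P. 2 \<le> card (flags_at \<Omega> x)) \<and>
     (\<exists>(x, M)\<in>\<Omega>. \<forall>y\<in>M - {x}. \<forall>z\<in>M - {x}.
        \<exists>g\<in>setwise_stab \<phi> (stabilizer G \<phi> x) M. \<phi> g y = z)"

definition flag_C :: "('a \<times> 'a set) set \<Rightarrow> (('a \<times> 'a set) \<times> ('a \<times> 'a set)) set" where
  "flag_C \<Omega> = {((x, M), (y, M')). (x, M) \<in> \<Omega> \<and> (y, M') \<in> \<Omega> \<and> x \<noteq> y \<and>
                  x \<in> M \<inter> M' \<and> y \<in> M \<inter> M'}"

definition self_paired :: "('c \<times> 'c) set \<Rightarrow> bool" where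
  "self_paired \<Psi> \<longleftrightarrow> (\<forall>u v. (u, v) \<in> \<Psi> \<longrightarrow> (v, u) \<in> \<Psi>)"

text \<open>The flag graph Gamma(Dbar, Omega, Psi) has vertex set Omega and adjacency
relation Psi; neighbourhood of a vertex:\<close>
definition nbrs :: "('c \<times> 'c) set \<Rightarrow> 'c \<Rightarrow> 'c set" where
  "nbrs \<Psi> v = {w. (v, w) \<in> \<Psi>}"

end

theory Submission
  imports Defs
begin

lemma orbit_count:
  fixes G (structure)
  assumes grp: "group G" and sub: "subgroup H G" and fin: "finite H"
    and clos: "\<forall>g\<in>carrier G. \<forall>x\<in>X. A g x \<in> X"
    and comp: "\<forall>g\<in>carrier G. \<forall>h\<in>carrier G. \<forall>x\<in>X. A (g \<otimes>\<^bsub>G\<^esub> h) x = A g (A h x)"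
    and one: "\<forall>x\<in>X. A \<one>\<^bsub>G\<^esub> x = x"
    and x0: "x0 \<in> X"
  shows "card ((\<lambda>g. A g x0) ` H) * card {h\<in>H. A h x0 = x0} = card H"
proof -
  interpret group G by (rule grp)
  let ?K = "{h\<in>H. A h x0 = x0}"
  have Hc: "\<And>h. h \<in> H \<Longrightarrow> h \<in> carrier G" using subgroup.subset[OF sub] by blast
  have cp: "\<And>g h. g \<in> carrier G \<Longrightarrow> h \<in> carrier G \<Longrightarrow> A (g \<otimes> h) x0 = A g (A h x0)"
    by (rule comp[rule_format, OF _ _ x0])
  have mc: "\<And>g h. g \<in> H \<Longrightarrow> h \<in> H \<Longrightarrow> g \<otimes> h \<in> H" by (rule subgroup.m_closed[OF sub])
  have ic: "\<And>g. g \<in> H \<Longrightarrow> inv g \<in> H" by (rule subgroup.m_inv_closed[OF sub])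
  have fib: "{g'\<in>H. A g' x0 = A g x0} = (\<lambda>k. g \<otimes> k) ` ?K" if g: "g \<in> H" for g
  proof
    show "{g'\<in>H. A g' x0 = A g x0} \<subseteq> (\<lambda>k. g \<otimes> k) ` ?K"
    proof
      fix g' assume "g' \<in> {g'\<in>H. A g' x0 = A g x0}"
      hence g': "g' \<in> H" "A g' x0 = A g x0" by auto
      have ig: "inv g \<in> H" using ic g .
      have "A (inv g \<otimes> g') x0 = A (inv g) (A g x0)" using cp[OF Hc[OF ig] Hc[OF g'(1)]] g'(2) by simp
      also have "\<dots> = A (inv g \<otimes> g) x0" using cp[OF Hc[OF ig] Hc[OF g]] by simp
      also have "inv g \<otimes> g = \<one>" using Hc[OF g] by simp
      also have "A \<one> x0 = x0" by (rule one[rule_format, OF x0])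
      finally have "inv g \<otimes> g' \<in> ?K" using mc[OF ig g'(1)] by blast
      moreover have "g' = g \<otimes> (inv g \<otimes> g')" using Hc[OF g] Hc[OF g'(1)]
        by (simp add: m_assoc[symmetric])
      ultimately show "g' \<in> (\<lambda>k. g \<otimes> k) ` ?K" by blast
    qed
    show "(\<lambda>k. g \<otimes> k) ` ?K \<subseteq> {g'\<in>H. A g' x0 = A g x0}"
    proof
      fix y assume "y \<in> (\<lambda>k. g \<otimes> k) ` ?K"
      then obtain k where k: "k \<in> H" "A k x0 = x0" "y = g \<otimes> k" by blast
      have "A (g \<otimes> k) x0 = A g (A k x0)" using cp[OF Hc[OF g] Hc[OF k(1)]] .
      thus "y \<in> {g'\<in>H. A g' x0 = A g x0}" using k mc[OF g k(1)] by simp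
    qed
  qed
  have cfib: "card {g'\<in>H. A g' x0 = A g x0} = card ?K" if g: "g \<in> H" for g
    unfolding fib[OF g]
  proof (rule card_image, rule inj_onI)
    fix x y assume "x \<in> ?K" "y \<in> ?K" "g \<otimes> x = g \<otimes> y"
    hence "x \<in> carrier G" "y \<in> carrier G" "g \<otimes> x = g \<otimes> y" using Hc by auto
    thus "x = y" using Hc[OF g] by simp
  qed
  have "card H = (\<Sum>y\<in>(\<lambda>g. A g x0) ` H. card {g'\<in>H. A g' x0 = y})"
    using sum.image_gen[OF fin, of "\<lambda>_. 1::nat" "\<lambda>g. A g x0"] by simp
  also have "\<dots> = (\<Sum>y\<in>(\<lambda>g. A g x0) ` H. card ?K)"
    by (rule sum.cong) (auto simp: cfib)
  finally show ?thesis by simp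
qed

lemma stab_subgroup:
  fixes G (structure)
  assumes grp: "group G" and sub: "subgroup H G"
    and clos: "\<forall>g\<in>carrier G. \<forall>x\<in>X. A g x \<in> X"
    and comp: "\<forall>g\<in>carrier G. \<forall>h\<in>carrier G. \<forall>x\<in>X. A (g \<otimes>\<^bsub>G\<^esub> h) x = A g (A h x)"
    and one: "\<forall>x\<in>X. A \<one>\<^bsub>G\<^esub> x = x"
    and x0: "x0 \<in> X"
  shows "subgroup {h\<in>H. A h x0 = x0} G"
proof -
  interpret group G by (rule grp)
  have Hc: "\<And>h. h \<in> H \<Longrightarrow> h \<in> carrier G" using subgroup.subset[OF sub] by blast
  have cp: "\<And>g h. g \<in> carrier G \<Longrightarrow> h \<in> carrier G \<Longrightarrow> A (g \<otimes> h) x0 = A g (A h x0)"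
    by (rule comp[rule_format, OF _ _ x0])
  have mc: "\<And>g h. g \<in> H \<Longrightarrow> h \<in> H \<Longrightarrow> g \<otimes> h \<in> H" by (rule subgroup.m_closed[OF sub])
  have ic: "\<And>g. g \<in> H \<Longrightarrow> inv g \<in> H" by (rule subgroup.m_inv_closed[OF sub])
  have o1: "A \<one> x0 = x0" by (rule one[rule_format, OF x0])
  show ?thesis
  proof (rule subgroupI)
    show "{h \<in> H. A h x0 = x0} \<subseteq> carrier G" using Hc by auto
    show "{h \<in> H. A h x0 = x0} \<noteq> {}" using o1 subgroup.one_closed[OF sub] by blast
    fix a assume a: "a \<in> {h \<in> H. A h x0 = x0}"
    hence aH: "a \<in> H" and ax: "A a x0 = x0" by auto
    have "A (inv a) x0 = A (inv a) (A a x0)" using ax by simp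
    also have "\<dots> = A (inv a \<otimes> a) x0" using cp[OF Hc[OF ic[OF aH]] Hc[OF aH]] by simp
    also have "inv a \<otimes> a = \<one>" using Hc[OF aH] by simp
    finally show "inv a \<in> {h \<in> H. A h x0 = x0}" using ic[OF aH] o1 by simp
    fix b assume b: "b \<in> {h \<in> H. A h x0 = x0}"
    hence bH: "b \<in> H" and bx: "A b x0 = x0" by auto
    have "A (a \<otimes> b) x0 = A a (A b x0)" using cp[OF Hc[OF aH] Hc[OF bH]] .
    thus "a \<otimes> b \<in> {h \<in> H. A h x0 = x0}" using mc[OF aH bH] ax bx by simp
  qed
qed

theorem lemma2p3:
  fixes G :: "('g, 'b) monoid_scheme" and \<phi> :: "'g \<Rightarrow> 'a \<Rightarrow> 'a"
    and P :: "'a set" and Ls :: "'a set set"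
    and \<sigma> \<tau> :: 'a and L N :: "'a set"
  defines "\<Omega> \<equiv> flag_orbit G \<phi> (\<sigma>, P - L)"
      and "\<Psi> \<equiv> flagpair_orbit G \<phi> ((\<sigma>, P - L), (\<tau>, P - N))"
  assumes D: "G2_point_transitive G \<phi> P Ls"
      and antiflag: "L \<in> Ls" "\<sigma> \<in> P" "\<sigma> \<notin> L"
      and Nline: "N \<in> Ls"
      and feas: "feasible G \<phi> P \<Omega>"
      and PsiC: "((\<sigma>, P - L), (\<tau>, P - N)) \<in> flag_C \<Omega>"
      and sp: "self_paired \<Psi>"
  shows "card \<Omega> = card P * card (set_orbit \<phi> (stabilizer G \<phi> \<sigma>) L)
    \<and> (\<forall>v\<in>\<Omega>. card (nbrs \<Psi> v) = (card P - card L - 1) *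
          card (set_orbit \<phi> (setwise_stab \<phi> (stabilizer G \<phi> \<sigma> \<inter> stabilizer G \<phi> \<tau>) L) N))
    \<and> card {v \<in> flags_at \<Omega> \<sigma>. nbrs \<Psi> v \<inter> flags_at \<Omega> \<tau> \<noteq> {}}
        = card (set_orbit \<phi> (stabilizer G \<phi> \<sigma> \<inter> stabilizer G \<phi> \<tau>) L)
    \<and> (\<forall>v\<in>flags_at \<Omega> \<sigma>. nbrs \<Psi> v \<inter> flags_at \<Omega> \<tau> \<noteq> {} \<longrightarrow>
          card (nbrs \<Psi> v \<inter> flags_at \<Omega> \<tau>) =
          card (set_orbit \<phi> (setwise_stab \<phi> (stabilizer G \<phi> \<sigma> \<inter> stabilizer G \<phi> \<tau>) L) N))"
  proof -
  note d = D[unfolded G2_point_transitive_def]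
  have finP: "finite P" using d by (rule conjunct1)
  have finG: "finite (carrier G)" using d[THEN conjunct2] by (rule conjunct1)
  have ls: "linear_space P Ls" using d[THEN conjunct2, THEN conjunct2] by (rule conjunct1)
  have GA: "group_action G P \<phi>" using d[THEN conjunct2, THEN conjunct2, THEN conjunct2] by (rule conjunct1)
  have tr2: "\<forall>x\<in>P. \<forall>y\<in>P. \<forall>x'\<in>P. \<forall>y'\<in>P. x \<noteq> y \<longrightarrow> x' \<noteq> y' \<longrightarrow>
        (\<exists>g\<in>carrier G. \<phi> g x = x' \<and> \<phi> g y = y')"
    using d[THEN conjunct2, THEN conjunct2, THEN conjunct2, THEN conjunct2] by (rule conjunct2)
  interpret GA: group_action G P \<phi> by (rule GA)
  have grp: "group G" by (rule group_hom.axioms(1)[OF GA.group_hom])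
  interpret group G by (rule grp)
  have LP: "L \<subseteq> P" "N \<subseteq> P" "2 \<le> card L"
  proof -
    have "\<forall>L\<in>Ls. L \<subseteq> P \<and> 2 \<le> card L" using ls unfolding linear_space_def by (rule conjunct1)
    thus "L \<subseteq> P" "N \<subseteq> P" "2 \<le> card L" using antiflag(1) Nline by blast+
  qed
  have pt_cl: "\<And>g x. g \<in> carrier G \<Longrightarrow> x \<in> P \<Longrightarrow> \<phi> g x \<in> P"
    by (rule GA.element_image[OF _ _ refl])
  have pt_comp: "\<And>g h x. g \<in> carrier G \<Longrightarrow> h \<in> carrier G \<Longrightarrow> x \<in> P \<Longrightarrow>
      \<phi> (g \<otimes>\<^bsub>G\<^esub> h) x = \<phi> g (\<phi> h x)"
    by (rule GA.composition_rule)
  have pt_one: "\<And>x. x \<in> P \<Longrightarrow> \<phi> \<one>\<^bsub>G\<^esub> x = x"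
    using fun_cong[OF GA.id_eq_one] by (metis restrict_apply')
  have pt_inj: "\<And>g x y. g \<in> carrier G \<Longrightarrow> x \<in> P \<Longrightarrow> y \<in> P \<Longrightarrow> (\<phi> g x = \<phi> g y) = (x = y)"
    by (rule inj_on_eq_iff[OF GA.inj_prop])
  have pt_inv: "\<And>g x. g \<in> carrier G \<Longrightarrow> x \<in> P \<Longrightarrow> \<phi> (inv\<^bsub>G\<^esub> g) (\<phi> g x) = x"
  proof -
    fix g x assume g: "g \<in> carrier G" and x: "x \<in> P"
    show "\<phi> (inv\<^bsub>G\<^esub> g) (\<phi> g x) = x"
      using pt_comp[OF inv_closed[OF g] g x] l_inv[OF g] pt_one[OF x] by simp
  qed
  have img_cl: "\<And>g S. g \<in> carrier G \<Longrightarrow> S \<subseteq> P \<Longrightarrow> \<phi> g ` S \<subseteq> P"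
    using pt_cl by blast
  have img_comp: "\<And>g h S. g \<in> carrier G \<Longrightarrow> h \<in> carrier G \<Longrightarrow> S \<subseteq> P \<Longrightarrow>
      \<phi> (g \<otimes>\<^bsub>G\<^esub> h) ` S = \<phi> g ` \<phi> h ` S"
    using pt_comp by (simp add: image_image subset_iff cong: image_cong)
  have img_one: "\<And>S. S \<subseteq> P \<Longrightarrow> \<phi> \<one>\<^bsub>G\<^esub> ` S = S"
    using pt_one by (simp add: subset_iff cong: image_cong)
  have img_compl: "\<And>g S. g \<in> carrier G \<Longrightarrow> S \<subseteq> P \<Longrightarrow> \<phi> g ` (P - S) = P - \<phi> g ` S"
  proof -
    fix g S assume g: "g \<in> carrier G" and S: "S \<subseteq> P"
    have "\<phi> g ` (P - S) = \<phi> g ` P - \<phi> g ` S"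
      by (rule inj_on_image_set_diff[OF GA.inj_prop[OF g]]) (use S in auto)
    thus "\<phi> g ` (P - S) = P - \<phi> g ` S" using GA.surj_prop[OF g] by simp
  qed
  have img_inj: "\<And>g S T. g \<in> carrier G \<Longrightarrow> S \<subseteq> P \<Longrightarrow> T \<subseteq> P \<Longrightarrow>
      (\<phi> g ` S = \<phi> g ` T) = (S = T)"
    by (rule inj_on_image_eq_iff[OF GA.inj_prop])
  have diff_eq: "\<And>S T. S \<subseteq> P \<Longrightarrow> T \<subseteq> P \<Longrightarrow> (P - S = P - T) = (S = T)" by blast
  have actP1: "\<forall>g\<in>carrier G. \<forall>x\<in>P. \<phi> g x \<in> P" by (intro ballI pt_cl)
  have actP2: "\<forall>g\<in>carrier G. \<forall>h\<in>carrier G. \<forall>x\<in>P. \<phi> (g \<otimes>\<^bsub>G\<^esub> h) x = \<phi> g (\<phi> h x)"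
    by (intro ballI pt_comp)
  have actP3: "\<forall>x\<in>P. \<phi> \<one>\<^bsub>G\<^esub> x = x" by (intro ballI pt_one)
  have actS1: "\<forall>g\<in>carrier G. \<forall>x\<in>Pow P. \<phi> g ` x \<in> Pow P"
    by (intro ballI PowI img_cl) (simp_all add: Pow_def)
  have actS2: "\<forall>g\<in>carrier G. \<forall>h\<in>carrier G. \<forall>x\<in>Pow P. \<phi> (g \<otimes>\<^bsub>G\<^esub> h) ` x = \<phi> g ` (\<phi> h ` x)"
    by (intro ballI img_comp) (simp_all add: Pow_def)
  have actS3: "\<forall>x\<in>Pow P. \<phi> \<one>\<^bsub>G\<^esub> ` x = x" by (intro ballI img_one) (simp add: Pow_def)
  have actF1: "\<forall>g\<in>carrier G. \<forall>x\<in>P \<times> Pow P. flag_act \<phi> g x \<in> P \<times> Pow P"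
    using pt_cl img_cl by (auto simp: flag_act_def)
  have actF2: "\<forall>g\<in>carrier G. \<forall>h\<in>carrier G. \<forall>x\<in>P \<times> Pow P.
      flag_act \<phi> (g \<otimes>\<^bsub>G\<^esub> h) x = flag_act \<phi> g (flag_act \<phi> h x)"
    using pt_comp img_comp by (auto simp: flag_act_def)
  have actF3: "\<forall>x\<in>P \<times> Pow P. flag_act \<phi> \<one>\<^bsub>G\<^esub> x = x"
    using pt_one img_one by (auto simp: flag_act_def)
  have flag_inj: "\<And>g x y. g \<in> carrier G \<Longrightarrow> x \<in> P \<times> Pow P \<Longrightarrow> y \<in> P \<times> Pow P \<Longrightarrow>
      (flag_act \<phi> g x = flag_act \<phi> g y) = (x = y)"
    using pt_inj img_inj by (auto simp: flag_act_def prod_eq_iff)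
  define v0 where "v0 = (\<sigma>, P - L)"
  define w0 where "w0 = (\<tau>, P - N)"
  define Gs where "Gs = stabilizer G \<phi> \<sigma>"
  define Gt where "Gt = stabilizer G \<phi> \<tau>"
  define K1 where "K1 = {h \<in> carrier G. flag_act \<phi> h v0 = v0}"
  define K2 where "K2 = setwise_stab \<phi> (Gs \<inter> Gt) L"
  have Om: "\<Omega> = (\<lambda>g. flag_act \<phi> g v0) ` carrier G"
    unfolding \<Omega>_def flag_orbit_def v0_def by simp
  have PsiE: "\<And>v w. ((v, w) \<in> \<Psi>) = (\<exists>g\<in>carrier G. v = flag_act \<phi> g v0 \<and> w = flag_act \<phi> g w0)"
    unfolding \<Psi>_def flagpair_orbit_def v0_def w0_def by auto
  have C: "v0 \<in> \<Omega>" "w0 \<in> \<Omega>" "\<sigma> \<noteq> \<tau>" "\<tau> \<in> P" "\<tau> \<notin> L" "\<tau> \<notin> N" "\<sigma> \<notin> N"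
    using PsiC LP unfolding flag_C_def v0_def w0_def by auto
  have v0P: "v0 \<in> P \<times> Pow P" and w0P: "w0 \<in> P \<times> Pow P"
    using antiflag C by (auto simp: v0_def w0_def)
  have Om_cl: "\<And>g v. g \<in> carrier G \<Longrightarrow> v \<in> \<Omega> \<Longrightarrow> flag_act \<phi> g v \<in> \<Omega>"
  proof -
    fix g v assume g: "g \<in> carrier G" and v: "v \<in> \<Omega>"
    then obtain h where h: "h \<in> carrier G" "v = flag_act \<phi> h v0" using Om by auto
    hence "flag_act \<phi> g v = flag_act \<phi> (g \<otimes>\<^bsub>G\<^esub> h) v0" using actF2 g v0P by auto
    thus "flag_act \<phi> g v \<in> \<Omega>" using Om g h by auto
  qed
  have fixv0: "(flag_act \<phi> h v0 = v0) = (\<phi> h \<sigma> = \<sigma> \<and> \<phi> h ` L = L)" if h: "h \<in> carrier G" for h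
  proof -
    have "flag_act \<phi> h v0 = (\<phi> h \<sigma>, P - \<phi> h ` L)"
      unfolding flag_act_def v0_def using img_compl[OF h LP(1)] by simp
    moreover have "(P - \<phi> h ` L = P - L) = (\<phi> h ` L = L)"
      by (rule diff_eq[OF img_cl[OF h LP(1)] LP(1)])
    ultimately show ?thesis unfolding v0_def by auto
  qed
  have fixw0: "(flag_act \<phi> h w0 = w0) = (\<phi> h \<tau> = \<tau> \<and> \<phi> h ` N = N)" if h: "h \<in> carrier G" for h
  proof -
    have "flag_act \<phi> h w0 = (\<phi> h \<tau>, P - \<phi> h ` N)"
      unfolding flag_act_def w0_def using img_compl[OF h LP(2)] by simp
    moreover have "(P - \<phi> h ` N = P - N) = (\<phi> h ` N = N)"
      by (rule diff_eq[OF img_cl[OF h LP(2)] LP(2)])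
    ultimately show ?thesis unfolding w0_def by auto
  qed
  have K1_eq: "K1 = setwise_stab \<phi> Gs L"
    unfolding K1_def setwise_stab_def Gs_def stabilizer_def using fixv0 by auto
  have K2_eq: "K2 = {h \<in> K1. \<phi> h \<tau> = \<tau>}"
    unfolding K1_eq K2_def setwise_stab_def Gs_def Gt_def stabilizer_def by auto
  have finK1: "finite K1" using finG unfolding K1_def by auto
  have subK1: "subgroup K1 G" unfolding K1_def
    by (rule stab_subgroup[OF grp subgroup_self actF1 actF2 actF3 v0P])
  have subGs: "subgroup Gs G" unfolding Gs_def by (rule GA.stabilizer_subgroup[OF antiflag(2)])
  have finGs: "finite Gs" by (rule finite_subset[OF subgroup.subset[OF subGs] finG])
  have oneK1: "\<one>\<^bsub>G\<^esub> \<in> K1" by (rule subgroup.one_closed[OF subK1])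
  have cardK1: "card K1 > 0" using finK1 oneK1 card_gt_0_iff by blast
  have cntA: "card ((\<lambda>g. \<phi> g \<sigma>) ` carrier G) * card {h \<in> carrier G. \<phi> h \<sigma> = \<sigma>} = card (carrier G)"
    by (rule orbit_count[OF grp subgroup_self finG actP1 actP2 actP3 antiflag(2)])
  have orbP: "(\<lambda>g. \<phi> g \<sigma>) ` carrier G = P"
  proof
    show "(\<lambda>g. \<phi> g \<sigma>) ` carrier G \<subseteq> P" using pt_cl antiflag(2) by blast
    show "P \<subseteq> (\<lambda>g. \<phi> g \<sigma>) ` carrier G"
    proof
      fix x assume x: "x \<in> P"
      show "x \<in> (\<lambda>g. \<phi> g \<sigma>) ` carrier G"
      proof (cases "x = \<sigma>")
        case True thus ?thesis using pt_one antiflag(2) by force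
      next
        case False
        obtain y where y: "y \<in> L" using LP(3) by fastforce
        hence "y \<in> P" "y \<noteq> \<sigma>" using LP antiflag by auto
        then obtain g where "g \<in> carrier G" "\<phi> g \<sigma> = x" using tr2 x False antiflag(2) by metis
        thus ?thesis by blast
      qed
    qed
  qed
  have cntB: "card ((\<lambda>g. \<phi> g ` L) ` Gs) * card {h \<in> Gs. \<phi> h ` L = L} = card Gs"
    by (rule orbit_count[OF grp subGs finGs actS1 actS2 actS3]) (use LP in auto)
  have cntC: "card \<Omega> * card K1 = card (carrier G)"
    unfolding Om K1_def
    by (rule orbit_count[OF grp subgroup_self finG actF1 actF2 actF3 v0P])
  have claim1: "card \<Omega> = card P * card (set_orbit \<phi> (stabilizer G \<phi> \<sigma>) L)"
  proof -
    have "card \<Omega> * card K1 = card P * card (set_orbit \<phi> Gs L) * card K1"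
      using cntA cntB cntC orbP K1_eq
      unfolding set_orbit_def setwise_stab_def Gs_def stabilizer_def by (simp add: mult.assoc)
    thus ?thesis using cardK1 Gs_def by simp
  qed
  have fc: "\<And>g h x. g \<in> carrier G \<Longrightarrow> h \<in> carrier G \<Longrightarrow> x \<in> P \<times> Pow P \<Longrightarrow>
      flag_act \<phi> (g \<otimes>\<^bsub>G\<^esub> h) x = flag_act \<phi> g (flag_act \<phi> h x)"
    using actF2 by (intro actF2[rule_format])
  have f1: "\<And>x. x \<in> P \<times> Pow P \<Longrightarrow> flag_act \<phi> \<one>\<^bsub>G\<^esub> x = x"
    by (rule actF3[rule_format])
  have fcl: "\<And>g x. g \<in> carrier G \<Longrightarrow> x \<in> P \<times> Pow P \<Longrightarrow> flag_act \<phi> g x \<in> P \<times> Pow P"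
    by (rule actF1[rule_format])
  have K1c: "\<And>k. k \<in> K1 \<Longrightarrow> k \<in> carrier G" unfolding K1_def by simp
  have K1v: "\<And>k. k \<in> K1 \<Longrightarrow> flag_act \<phi> k v0 = v0" unfolding K1_def by simp
  have nb: "nbrs \<Psi> (flag_act \<phi> g v0) = (\<lambda>k. flag_act \<phi> g (flag_act \<phi> k w0)) ` K1"
    if g: "g \<in> carrier G" for g
  proof (intro Set.set_eqI iffI)
    fix w assume "w \<in> nbrs \<Psi> (flag_act \<phi> g v0)"
    hence "(flag_act \<phi> g v0, w) \<in> \<Psi>" by (simp add: nbrs_def)
    hence "\<exists>h\<in>carrier G. flag_act \<phi> g v0 = flag_act \<phi> h v0 \<and> w = flag_act \<phi> h w0"
      using PsiE by simp
    then obtain h where h: "h \<in> carrier G" "flag_act \<phi> g v0 = flag_act \<phi> h v0"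
      "w = flag_act \<phi> h w0" by blast
    have ig: "inv\<^bsub>G\<^esub> g \<in> carrier G" using g by simp
    define k where "k = inv\<^bsub>G\<^esub> g \<otimes>\<^bsub>G\<^esub> h"
    have kc: "k \<in> carrier G" unfolding k_def using ig h(1) by simp
    have "flag_act \<phi> k v0 = flag_act \<phi> (inv\<^bsub>G\<^esub> g) (flag_act \<phi> h v0)"
      unfolding k_def by (rule fc[OF ig h(1) v0P])
    also have "\<dots> = flag_act \<phi> (inv\<^bsub>G\<^esub> g) (flag_act \<phi> g v0)" using h(2) by simp
    also have "\<dots> = flag_act \<phi> (inv\<^bsub>G\<^esub> g \<otimes>\<^bsub>G\<^esub> g) v0" using fc[OF ig g v0P] by simp
    also have "\<dots> = v0" using f1[OF v0P] g by simp
    finally have kK: "k \<in> K1" unfolding K1_def using kc by simp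
    have "g \<otimes>\<^bsub>G\<^esub> k = h" unfolding k_def using g h(1) ig by (simp add: m_assoc[symmetric])
    hence "flag_act \<phi> g (flag_act \<phi> k w0) = w" using fc[OF g kc w0P] h(3) by simp
    thus "w \<in> (\<lambda>k. flag_act \<phi> g (flag_act \<phi> k w0)) ` K1" using kK by blast
  next
    fix w assume "w \<in> (\<lambda>k. flag_act \<phi> g (flag_act \<phi> k w0)) ` K1"
    then obtain k where k: "k \<in> K1" "w = flag_act \<phi> g (flag_act \<phi> k w0)" by blast
    have kc: "k \<in> carrier G" using K1c[OF k(1)] .
    have hc: "g \<otimes>\<^bsub>G\<^esub> k \<in> carrier G" using g kc by simp
    have "flag_act \<phi> (g \<otimes>\<^bsub>G\<^esub> k) v0 = flag_act \<phi> g v0" using fc[OF g kc v0P] K1v[OF k(1)] by simp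
    moreover have "flag_act \<phi> (g \<otimes>\<^bsub>G\<^esub> k) w0 = w" using fc[OF g kc w0P] k(2) by simp
    ultimately have "(flag_act \<phi> g v0, w) \<in> \<Psi>" using PsiE hc by metis
    thus "w \<in> nbrs \<Psi> (flag_act \<phi> g v0)" by (simp add: nbrs_def)
  qed
  have orbw_sub: "(\<lambda>k. flag_act \<phi> k w0) ` K1 \<subseteq> P \<times> Pow P" using fcl[OF K1c w0P] by blast
  have nbcard: "card (nbrs \<Psi> (flag_act \<phi> g v0)) = card ((\<lambda>k. flag_act \<phi> k w0) ` K1)"
    if g: "g \<in> carrier G" for g
  proof -
    have "nbrs \<Psi> (flag_act \<phi> g v0) = flag_act \<phi> g ` ((\<lambda>k. flag_act \<phi> k w0) ` K1)"
      unfolding nb[OF g] image_image by simp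
    moreover have "inj_on (flag_act \<phi> g) ((\<lambda>k. flag_act \<phi> k w0) ` K1)"
    proof (rule inj_onI)
      fix x y assume "x \<in> (\<lambda>k. flag_act \<phi> k w0) ` K1" "y \<in> (\<lambda>k. flag_act \<phi> k w0) ` K1"
        "flag_act \<phi> g x = flag_act \<phi> g y"
      thus "x = y" using flag_inj[OF g] orbw_sub by blast
    qed
    ultimately show ?thesis by (simp add: card_image)
  qed
  have subK2: "subgroup K2 G" unfolding K2_eq
    by (rule stab_subgroup[OF grp subK1 actP1 actP2 actP3 C(4)])
  have finK2: "finite K2" unfolding K2_eq using finK1 by simp
  have cnt1: "card ((\<lambda>k. flag_act \<phi> k w0) ` K1) * card {h \<in> K1. flag_act \<phi> h w0 = w0} = card K1"
    by (rule orbit_count[OF grp subK1 finK1 actF1 actF2 actF3 w0P])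
  have cnt2: "card ((\<lambda>k. \<phi> k \<tau>) ` K1) * card {h \<in> K1. \<phi> h \<tau> = \<tau>} = card K1"
    by (rule orbit_count[OF grp subK1 finK1 actP1 actP2 actP3 C(4)])
  have cnt3: "card ((\<lambda>k. \<phi> k ` N) ` K2) * card {h \<in> K2. \<phi> h ` N = N} = card K2"
    by (rule orbit_count[OF grp subK2 finK2 actS1 actS2 actS3]) (use LP in simp)
  have Seq: "{h \<in> K1. flag_act \<phi> h w0 = w0} = {h \<in> K2. \<phi> h ` N = N}"
    unfolding K2_eq using fixw0 K1c by blast
  have feasK1: "\<forall>y\<in>P - L - {\<sigma>}. \<exists>k\<in>K1. \<phi> k \<tau> = y"
  proof
    fix y assume y: "y \<in> P - L - {\<sigma>}"
    have "\<exists>(x, M)\<in>\<Omega>. \<forall>y\<in>M - {x}. \<forall>z\<in>M - {x}.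
        \<exists>g\<in>setwise_stab \<phi> (stabilizer G \<phi> x) M. \<phi> g y = z"
      using feas unfolding feasible_def by (rule conjunct2)
    then obtain x M where xM: "(x, M) \<in> \<Omega>" and tr: "\<forall>y\<in>M - {x}. \<forall>z\<in>M - {x}.
        \<exists>g\<in>setwise_stab \<phi> (stabilizer G \<phi> x) M. \<phi> g y = z" by blast
    obtain g0 where g0: "g0 \<in> carrier G" "(x, M) = flag_act \<phi> g0 v0" using xM Om by blast
    have x: "x = \<phi> g0 \<sigma>" and M: "M = \<phi> g0 ` (P - L)"
      using g0(2) unfolding flag_act_def v0_def by simp_all
    have yP: "y \<in> P" "y \<noteq> \<sigma>" "y \<notin> L" using y by auto
    have "\<phi> g0 \<tau> \<in> M - {x}" unfolding M x using C antiflag pt_inj[OF g0(1)] by blast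
    moreover have "\<phi> g0 y \<in> M - {x}" unfolding M x using yP antiflag pt_inj[OF g0(1)] by blast
    ultimately obtain g where g: "g \<in> setwise_stab \<phi> (stabilizer G \<phi> x) M" "\<phi> g (\<phi> g0 \<tau>) = \<phi> g0 y"
      using tr by blast
    have gc: "g \<in> carrier G" and gx: "\<phi> g x = x" and gM: "\<phi> g ` M = M"
      using g(1) unfolding setwise_stab_def stabilizer_def by auto
    have ig: "inv\<^bsub>G\<^esub> g0 \<in> carrier G" using g0(1) by simp
    define k where "k = (inv\<^bsub>G\<^esub> g0 \<otimes>\<^bsub>G\<^esub> g) \<otimes>\<^bsub>G\<^esub> g0"
    have kc: "k \<in> carrier G" unfolding k_def using ig gc g0(1) by simp
    have kpt: "\<phi> k a = \<phi> (inv\<^bsub>G\<^esub> g0) (\<phi> g (\<phi> g0 a))" if a: "a \<in> P" for a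
      unfolding k_def using pt_comp[OF m_closed[OF ig gc] g0(1) a] pt_comp[OF ig gc pt_cl[OF g0(1) a]]
      by simp
    have kimg: "\<phi> k ` S = \<phi> (inv\<^bsub>G\<^esub> g0) ` \<phi> g ` \<phi> g0 ` S" if S: "S \<subseteq> P" for S
      unfolding k_def using img_comp[OF m_closed[OF ig gc] g0(1) S] img_comp[OF ig gc img_cl[OF g0(1) S]]
      by simp
    have "\<phi> k \<sigma> = \<sigma>" using kpt[OF antiflag(2)] gx x pt_inv[OF g0(1) antiflag(2)] by simp
    moreover have "\<phi> k ` (P - L) = P - L"
    proof -
      have "\<phi> k ` (P - L) = \<phi> (inv\<^bsub>G\<^esub> g0) ` \<phi> g0 ` (P - L)" using kimg[of "P - L"] gM M by simp
      also have "\<dots> = \<phi> (inv\<^bsub>G\<^esub> g0 \<otimes>\<^bsub>G\<^esub> g0) ` (P - L)" using img_comp[OF ig g0(1), of "P - L"] by simp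
      also have "\<dots> = P - L" using img_one[of "P - L"] g0(1) by simp
      finally show ?thesis .
    qed
    ultimately have "flag_act \<phi> k v0 = v0" unfolding flag_act_def v0_def by simp
    hence "k \<in> K1" unfolding K1_def using kc by simp
    moreover have "\<phi> k \<tau> = y" using kpt[OF C(4)] g(2) pt_inv[OF g0(1) yP(1)] by simp
    ultimately show "\<exists>k\<in>K1. \<phi> k \<tau> = y" by blast
  qed
  have orbt: "(\<lambda>k. \<phi> k \<tau>) ` K1 = P - L - {\<sigma>}"
  proof
    show "P - L - {\<sigma>} \<subseteq> (\<lambda>k. \<phi> k \<tau>) ` K1"
    proof (rule Set.subsetI)
      fix y assume "y \<in> P - L - {\<sigma>}"
      then obtain k where "k \<in> K1" "\<phi> k \<tau> = y" using feasK1 by blast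
      thus "y \<in> (\<lambda>k. \<phi> k \<tau>) ` K1" by (metis rev_image_eqI)
    qed
    show "(\<lambda>k. \<phi> k \<tau>) ` K1 \<subseteq> P - L - {\<sigma>}"
    proof (rule Set.subsetI)
      fix z assume "z \<in> (\<lambda>k. \<phi> k \<tau>) ` K1"
      then obtain k where k: "k \<in> K1" "z = \<phi> k \<tau>" by blast
      have kc: "k \<in> carrier G" using K1c[OF k(1)] .
      have ks: "\<phi> k \<sigma> = \<sigma>" "\<phi> k ` L = L" using fixv0[OF kc] K1v[OF k(1)] by auto
      have "z \<in> P" using k(2) pt_cl[OF kc C(4)] by simp
      moreover have "z \<noteq> \<sigma>" using k(2) ks(1) pt_inj[OF kc C(4) antiflag(2)] C(3) by simp
      moreover have "z \<notin> L"
      proof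
        assume "z \<in> L"
        hence "z \<in> \<phi> k ` L" using ks(2) by simp
        then obtain l where l: "l \<in> L" "z = \<phi> k l" by (elim imageE) simp
        have "l \<in> P" using l(1) LP(1) by (rule Set.subsetD[rotated])
        hence "\<tau> = l" using k(2) l(2) pt_inj[OF kc C(4), of l] by simp
        thus False using l(1) C(5) by simp
      qed
      ultimately show "z \<in> P - L - {\<sigma>}" by simp
    qed
  qed
  have cardPL: "card (P - L - {\<sigma>}) = card P - card L - 1"
    using LP(1) antiflag finP by (simp add: card_Diff_subset finite_subset)
  have finSfl: "finite {h \<in> K1. flag_act \<phi> h w0 = w0}" using finK1 by simp
  have oneSfl: "\<one>\<^bsub>G\<^esub> \<in> {h \<in> K1. flag_act \<phi> h w0 = w0}" using oneK1 f1[OF w0P] by simp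
  have Spos: "card {h \<in> K1. flag_act \<phi> h w0 = w0} > 0" using finSfl oneSfl card_gt_0_iff by blast
  have orbN: "set_orbit \<phi> K2 N = (\<lambda>k. \<phi> k ` N) ` K2" unfolding set_orbit_def by simp
  have claim2: "card (nbrs \<Psi> v) = (card P - card L - 1) * card (set_orbit \<phi> K2 N)" if v: "v \<in> \<Omega>" for v
  proof -
    obtain g where g: "g \<in> carrier G" "v = flag_act \<phi> g v0" using v Om by blast
    have "card ((\<lambda>k. flag_act \<phi> k w0) ` K1) * card {h \<in> K1. flag_act \<phi> h w0 = w0}
        = ((card P - card L - 1) * card (set_orbit \<phi> K2 N)) * card {h \<in> K1. flag_act \<phi> h w0 = w0}"
      using cnt1 cnt2 cnt3 orbt cardPL K2_eq Seq orbN by (simp add: mult.assoc)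
    hence "card ((\<lambda>k. flag_act \<phi> k w0) ` K1) = (card P - card L - 1) * card (set_orbit \<phi> K2 N)"
      using Spos by simp
    thus ?thesis using nbcard[OF g(1)] g(2) by simp
  qed
  have T_eq: "{v \<in> flags_at \<Omega> \<sigma>. nbrs \<Psi> v \<inter> flags_at \<Omega> \<tau> \<noteq> {}} = (\<lambda>h. flag_act \<phi> h v0) ` (Gs \<inter> Gt)"
  proof (intro Set.set_eqI iffI)
    fix v assume "v \<in> {v \<in> flags_at \<Omega> \<sigma>. nbrs \<Psi> v \<inter> flags_at \<Omega> \<tau> \<noteq> {}}"
    hence v: "v \<in> \<Omega>" "fst v = \<sigma>" and "\<exists>w. (v, w) \<in> \<Psi> \<and> fst w = \<tau>"
      unfolding flags_at_def nbrs_def by auto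
    then obtain w where w: "(v, w) \<in> \<Psi>" "fst w = \<tau>" by blast
    then obtain h where h: "h \<in> carrier G" "v = flag_act \<phi> h v0" "w = flag_act \<phi> h w0"
      using PsiE[of v w] by blast
    have "\<phi> h \<sigma> = \<sigma>" "\<phi> h \<tau> = \<tau>" using h v(2) w(2) unfolding flag_act_def v0_def w0_def by simp_all
    hence "h \<in> Gs \<inter> Gt" unfolding Gs_def Gt_def stabilizer_def using h(1) by simp
    thus "v \<in> (\<lambda>h. flag_act \<phi> h v0) ` (Gs \<inter> Gt)" using h(2) by blast
  next
    fix v assume "v \<in> (\<lambda>h. flag_act \<phi> h v0) ` (Gs \<inter> Gt)"
    then obtain h where h: "h \<in> Gs \<inter> Gt" "v = flag_act \<phi> h v0" by blast
    have hc: "h \<in> carrier G" and hs: "\<phi> h \<sigma> = \<sigma>" and ht: "\<phi> h \<tau> = \<tau>"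
      using h(1) unfolding Gs_def Gt_def stabilizer_def by auto
    have "v \<in> \<Omega>" using Om h(2) hc by blast
    moreover have "fst v = \<sigma>" using h(2) hs unfolding flag_act_def v0_def by simp
    moreover have "flag_act \<phi> h w0 \<in> nbrs \<Psi> v" unfolding nbrs_def using PsiE h(2) hc by blast
    moreover have "flag_act \<phi> h w0 \<in> flags_at \<Omega> \<tau>"
      unfolding flags_at_def using Om_cl[OF hc C(2)] ht unfolding flag_act_def w0_def by simp
    ultimately show "v \<in> {v \<in> flags_at \<Omega> \<sigma>. nbrs \<Psi> v \<inter> flags_at \<Omega> \<tau> \<noteq> {}}"
      unfolding flags_at_def by blast
  qed
  have injc: "inj_on (\<lambda>X. (a::'a, P - X)) (Pow P)" for a
    by (rule inj_onI) (use diff_eq in auto)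
  have claim3: "card {v \<in> flags_at \<Omega> \<sigma>. nbrs \<Psi> v \<inter> flags_at \<Omega> \<tau> \<noteq> {}} = card (set_orbit \<phi> (Gs \<inter> Gt) L)"
  proof -
    have "(\<lambda>h. flag_act \<phi> h v0) ` (Gs \<inter> Gt) = (\<lambda>X. (\<sigma>, P - X)) ` set_orbit \<phi> (Gs \<inter> Gt) L"
      unfolding set_orbit_def image_image
    proof (rule image_cong[OF refl])
      fix h assume "h \<in> Gs \<inter> Gt"
      hence hc: "h \<in> carrier G" and hs: "\<phi> h \<sigma> = \<sigma>" unfolding Gs_def Gt_def stabilizer_def by auto
      show "flag_act \<phi> h v0 = (\<sigma>, P - \<phi> h ` L)"
        unfolding flag_act_def v0_def using hs img_compl[OF hc LP(1)] by simp
    qed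
    moreover have "set_orbit \<phi> (Gs \<inter> Gt) L \<subseteq> Pow P"
      unfolding set_orbit_def Gs_def stabilizer_def using img_cl LP(1) by auto
    ultimately show ?thesis unfolding T_eq using card_image[OF inj_on_subset[OF injc]] by metis
  qed
  have claim4: "card (nbrs \<Psi> v \<inter> flags_at \<Omega> \<tau>) = card (set_orbit \<phi> K2 N)"
    if v: "v \<in> flags_at \<Omega> \<sigma>" "nbrs \<Psi> v \<inter> flags_at \<Omega> \<tau> \<noteq> {}" for v
  proof -
    have "v \<in> (\<lambda>h. flag_act \<phi> h v0) ` (Gs \<inter> Gt)" using v T_eq by blast
    then obtain h where h: "h \<in> Gs \<inter> Gt" "v = flag_act \<phi> h v0" by blast
    have hc: "h \<in> carrier G" and ht: "\<phi> h \<tau> = \<tau>"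
      using h(1) unfolding Gs_def Gt_def stabilizer_def by auto
    have eq: "nbrs \<Psi> v \<inter> flags_at \<Omega> \<tau> = flag_act \<phi> h ` ((\<lambda>k. flag_act \<phi> k w0) ` K2)"
    proof -
      have "nbrs \<Psi> v \<inter> flags_at \<Omega> \<tau> = {w \<in> (\<lambda>k. flag_act \<phi> h (flag_act \<phi> k w0)) ` K1. fst w = \<tau>}"
        unfolding h(2) nb[OF hc] flags_at_def using Om_cl[OF hc Om_cl[OF K1c C(2)]] by blast
      also have "\<dots> = (\<lambda>k. flag_act \<phi> h (flag_act \<phi> k w0)) ` {k \<in> K1. \<phi> k \<tau> = \<tau>}"
      proof -
        have "fst (flag_act \<phi> h (flag_act \<phi> k w0)) = \<tau> \<longleftrightarrow> \<phi> k \<tau> = \<tau>" if k: "k \<in> K1" for k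
        proof -
          have "fst (flag_act \<phi> h (flag_act \<phi> k w0)) = \<phi> h (\<phi> k \<tau>)"
            unfolding flag_act_def w0_def by simp
          moreover have "(\<phi> h (\<phi> k \<tau>) = \<phi> h \<tau>) = (\<phi> k \<tau> = \<tau>)"
            by (rule pt_inj[OF hc pt_cl[OF K1c[OF k] C(4)] C(4)])
          ultimately show ?thesis using ht by simp
        qed
        thus ?thesis by blast
      qed
      finally show ?thesis unfolding K2_eq image_image by simp
    qed
    have sub2: "(\<lambda>k. flag_act \<phi> k w0) ` K2 \<subseteq> P \<times> Pow P" using orbw_sub K2_eq by blast
    have "card (nbrs \<Psi> v \<inter> flags_at \<Omega> \<tau>) = card ((\<lambda>k. flag_act \<phi> k w0) ` K2)"
      unfolding eq
    proof (rule card_image, rule inj_onI)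
      fix x y assume "x \<in> (\<lambda>k. flag_act \<phi> k w0) ` K2" "y \<in> (\<lambda>k. flag_act \<phi> k w0) ` K2"
        "flag_act \<phi> h x = flag_act \<phi> h y"
      thus "x = y" using flag_inj[OF hc] sub2 by blast
    qed
    also have "(\<lambda>k. flag_act \<phi> k w0) ` K2 = (\<lambda>X. (\<tau>, P - X)) ` set_orbit \<phi> K2 N"
      unfolding set_orbit_def image_image
    proof (rule image_cong[OF refl])
      fix k assume "k \<in> K2"
      hence kc: "k \<in> carrier G" and kt: "\<phi> k \<tau> = \<tau>" unfolding K2_eq using K1c by auto
      show "flag_act \<phi> k w0 = (\<tau>, P - \<phi> k ` N)"
        unfolding flag_act_def w0_def using kt img_compl[OF kc LP(2)] by simp
    qed
    also have "card \<dots> = card (set_orbit \<phi> K2 N)"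
    proof (rule card_image, rule inj_on_subset[OF injc])
      show "set_orbit \<phi> K2 N \<subseteq> Pow P"
        unfolding set_orbit_def K2_eq using img_cl[OF K1c LP(2)] by blast
    qed
    finally show ?thesis .
  qed
  show ?thesis
    using claim1 claim2 claim3 claim4 unfolding K2_def Gs_def Gt_def by blast
qed

end
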